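(* Let $\mathbb{Q}_2=\mathbb{Q}\times\mathbb{Q}$ and $$A:=\Big(\bigcup_{\mathbf{v}\in\mathbb{Q}_2}S(\mathbf{v},1)\Big)^c,\qquad S(\mathbf{v},1)=\{x\in\mathbb{R}^2:|x-\mathbf{v}|=1\}.$$ Then $A$ is a dense $G_\delta$ subset of $\mathbb{R}^2$ whose complement has two-dimensional Lebesgue measure zero, and $(A+S^1)\cap\mathbb{Q}_2=\emptyset$; in particular $A+S^1$ has empty interior.
   Context: $S^1$ is the Euclidean unit circle; $X+Y=\{x+y:x\in X,y\in Y\}$. *)

theory Defs
  imports "HOL-Analysis.Analysis" "HOL-Library.Set_Algebras"
begin

definition Q2 :: "(real^2) set" where
  "Q2 = {v. \<forall>i. v $ i \<in> \<rat>}"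

definition Aset :: "(real^2) set" where
  "Aset = - (\<Union>v\<in>Q2. sphere v 1)"

end

theory Submission
  imports Defs
begin

lemma Q2_eq: "Q2 = (\<lambda>(a,b). vector [a,b]) ` (\<rat> \<times> \<rat>)"
proof (rule set_eqI, rule iffI)
  fix v :: "real^2" assume "v \<in> Q2"
  hence "v $ 1 \<in> \<rat>" "v $ 2 \<in> \<rat>" by (auto simp: Q2_def)
  moreover have "v = vector [v$1, v$2]"
    by (simp add: vec_eq_iff forall_2)
  ultimately show "v \<in> (\<lambda>(a,b). vector [a,b]) ` (\<rat> \<times> \<rat>)" by force
next
  fix v :: "real^2" assume "v \<in> (\<lambda>(a,b). vector [a,b]) ` (\<rat> \<times> \<rat>)"
  then show "v \<in> Q2" by (auto simp: Q2_def forall_2)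
qed

lemma countable_Q2: "countable Q2"
  unfolding Q2_eq by (intro countable_image countable_SIGMA countable_rat)

lemma compl_A: "- Aset = (\<Union>v\<in>Q2. sphere v 1)"
  by (simp add: Aset_def)

lemma sphere_null: "sphere (c::real^2) r \<in> null_sets lborel"
  using negligible_sphere[of c r]
  by (auto simp: null_sets_completion_iff negligible_iff_null_sets negligible_convex_frontier)

lemma negl_compl: "negligible (- Aset)"
  unfolding compl_A
  by (intro negligible_countable_Union countable_image countable_Q2) (auto simp: negligible_sphere)

lemma Q2_dense: "open (S::(real^2) set) \<Longrightarrow> S \<noteq> {} \<Longrightarrow> S \<inter> Q2 \<noteq> {}"
proof -
  assume "open S" "S \<noteq> {}"
  then obtain x where "x \<in> S" by auto
  then obtain e where e: "e > 0" "ball x e \<subseteq> S" using \<open>open S\<close> open_contains_ball by blast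
  obtain a where a0: "a \<in> \<rat>" "x$1 - e/2 < a" "a < x$1 + e/2"
    using Rats_dense_in_real[of "x$1 - e/2" "x$1 + e/2"] e by auto
  then have a: "a \<in> \<rat>" "\<bar>a - x$1\<bar> < e/2" by (simp add: abs_less_iff, linarith)
  obtain b where b0: "b \<in> \<rat>" "x$2 - e/2 < b" "b < x$2 + e/2"
    using Rats_dense_in_real[of "x$2 - e/2" "x$2 + e/2"] e by auto
  then have b: "b \<in> \<rat>" "\<bar>b - x$2\<bar> < e/2" by (simp add: abs_less_iff, linarith)
  define q :: "real^2" where "q = vector [a,b]"
  have "q \<in> Q2" using a b by (auto simp: Q2_def q_def forall_2)
  have "dist x q \<le> \<bar>(x - q)$1\<bar> + \<bar>(x - q)$2\<bar>"
    using norm_le_l1_cart[of "x - q"] by (simp add: dist_norm sum_2)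
  also have "\<dots> < e" using a b by (simp add: q_def abs_minus_commute)
  finally have "q \<in> S" using e by auto
  with \<open>q \<in> Q2\<close> show ?thesis by auto
qed

theorem mainTheorem9:
  shows "closure Aset = UNIV \<and> gdelta_in euclidean Aset \<and>
         - Aset \<in> null_sets lborel \<and>
         (Aset + sphere (0::real^2) 1) \<inter> Q2 = {} \<and>
         interior (Aset + sphere (0::real^2) 1) = {}"
proof (intro conjI)
  have "interior (- Aset) = {}"
    using negl_compl open_not_negligible negligible_subset interior_subset open_interior by metis
  then show "closure Aset = UNIV" by (simp add: closure_interior)
next
  have "fsigma_in euclidean (- Aset)"
    unfolding compl_A
    by (intro fsigma_in_Union countable_image countable_Q2) (auto intro: closed_imp_fsigma_in)
  then show "gdelta_in euclidean Aset"
    by (simp add: gdelta_in_fsigma_in Compl_eq_Diff_UNIV)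
next
  show "- Aset \<in> null_sets lborel"
    unfolding compl_A by (intro null_sets_UN' countable_Q2 sphere_null)
next
  show D: "(Aset + sphere (0::real^2) 1) \<inter> Q2 = {}"
  proof (rule ccontr)
    assume "(Aset + sphere (0::real^2) 1) \<inter> Q2 \<noteq> {}"
    then obtain a s where "a \<in> Aset" "s \<in> sphere (0::real^2) 1" "a + s \<in> Q2"
      by (auto simp: set_plus_def)
    define q where "q = a + s"
    have "q \<in> Q2" using \<open>a + s \<in> Q2\<close> by (simp add: q_def)
    have "a \<in> sphere q 1" using \<open>s \<in> sphere 0 1\<close> by (simp add: dist_norm q_def)
    with \<open>q \<in> Q2\<close> \<open>a \<in> Aset\<close> show False by (auto simp: Aset_def)
  qed
  show "interior (Aset + sphere (0::real^2) 1) = {}"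
  proof (rule ccontr)
    assume "interior (Aset + sphere (0::real^2) 1) \<noteq> {}"
    then have "interior (Aset + sphere (0::real^2) 1) \<inter> Q2 \<noteq> {}" using Q2_dense by blast
    with D interior_subset show False by blast
  qed
qed

end
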